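(* For every positive integer $t$ and every $\epsilon>0$ there is a positive integer $d$ such that every connected, induced $S_{t,t}$-free bipartite graph $G$ with $\delta(G)\geq d$ whose two parts each have $n$ vertices satisfies $e(G)\geq (1-\epsilon)n^2$.
   Context: For positive integers $a,b$, the $(a,b)$-biclaw $S_{a,b}$ is the graph with vertex set $\{x,x_1,\dots,x_a,y,y_1,\dots,y_b\}$ and edge set $\{xy\}\cup\{xy_1,\dots,xy_b\}\cup\{yx_1,\dots,yx_a\}$. A graph is induced $H$-free if it has no induced subgraph isomorphic to $H$. $\delta(G)$ is the minimum degree and $e(G)$ the number of edges. *)

theory Defs
  imports Complex_Main
begin

definition simple_graph :: "'a set \<Rightarrow> ('a \<Rightarrow> 'a \<Rightarrow> bool) \<Rightarrow> bool" where
  "simple_graph V E \<longleftrightarrow> finite V \<and> (\<forall>u v. E u v \<longrightarrow> E v u) \<and> (\<forall>v. \<not> E v v)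
     \<and> (\<forall>u v. E u v \<longrightarrow> u \<in> V \<and> v \<in> V)"

definition neighbours :: "'a set \<Rightarrow> ('a \<Rightarrow> 'a \<Rightarrow> bool) \<Rightarrow> 'a \<Rightarrow> 'a set" where
  "neighbours V E v = {u \<in> V. E v u}"

definition degree :: "'a set \<Rightarrow> ('a \<Rightarrow> 'a \<Rightarrow> bool) \<Rightarrow> 'a \<Rightarrow> nat" where
  "degree V E v = card (neighbours V E v)"

definition min_degree_ge :: "'a set \<Rightarrow> ('a \<Rightarrow> 'a \<Rightarrow> bool) \<Rightarrow> nat \<Rightarrow> bool" where
  "min_degree_ge V E d \<longleftrightarrow> (\<forall>v\<in>V. d \<le> degree V E v)"

definition edge_set :: "'a set \<Rightarrow> ('a \<Rightarrow> 'a \<Rightarrow> bool) \<Rightarrow> 'a set set" where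
  "edge_set V E = {{u, v} | u v. u \<in> V \<and> v \<in> V \<and> E u v}"

definition num_edges :: "'a set \<Rightarrow> ('a \<Rightarrow> 'a \<Rightarrow> bool) \<Rightarrow> nat" where
  "num_edges V E = card (edge_set V E)"

definition connected_graph :: "'a set \<Rightarrow> ('a \<Rightarrow> 'a \<Rightarrow> bool) \<Rightarrow> bool" where
  "connected_graph V E \<longleftrightarrow> V \<noteq> {} \<and>
     (\<forall>u\<in>V. \<forall>v\<in>V. (\<lambda>a b. a \<in> V \<and> b \<in> V \<and> E a b)\<^sup>*\<^sup>* u v)"

definition bipartite_with :: "'a set \<Rightarrow> ('a \<Rightarrow> 'a \<Rightarrow> bool) \<Rightarrow> 'a set \<Rightarrow> 'a set \<Rightarrow> bool" where
  "bipartite_with V E A B \<longleftrightarrow> A \<union> B = V \<and> A \<inter> B = {} \<and>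
     (\<forall>u v. E u v \<longrightarrow> (u \<in> A \<and> v \<in> B) \<or> (u \<in> B \<and> v \<in> A))"

text \<open>Vertices of the biclaw S_{a,b}: x, y, x_1..x_a, y_1..y_b.\<close>
datatype bc_vertex = BX | BY | BXi nat | BYj nat

definition biclaw_V :: "nat \<Rightarrow> nat \<Rightarrow> bc_vertex set" where
  "biclaw_V a b = {BX, BY} \<union> BXi ` {1..a} \<union> BYj ` {1..b}"

definition biclaw_E0 :: "bc_vertex \<Rightarrow> bc_vertex \<Rightarrow> bool" where
  "biclaw_E0 u v \<longleftrightarrow> (u = BX \<and> v = BY) \<or> (u = BX \<and> (\<exists>j. v = BYj j))
                     \<or> (u = BY \<and> (\<exists>i. v = BXi i))"

definition biclaw_E :: "nat \<Rightarrow> nat \<Rightarrow> bc_vertex \<Rightarrow> bc_vertex \<Rightarrow> bool" where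
  "biclaw_E a b u v \<longleftrightarrow> u \<in> biclaw_V a b \<and> v \<in> biclaw_V a b \<and>
     (biclaw_E0 u v \<or> biclaw_E0 v u)"

definition induced_subgraph_of ::
  "'b set \<Rightarrow> ('b \<Rightarrow> 'b \<Rightarrow> bool) \<Rightarrow> 'a set \<Rightarrow> ('a \<Rightarrow> 'a \<Rightarrow> bool) \<Rightarrow> bool" where
  "induced_subgraph_of VH EH VG EG \<longleftrightarrow>
     (\<exists>f. inj_on f VH \<and> f ` VH \<subseteq> VG \<and>
          (\<forall>u\<in>VH. \<forall>v\<in>VH. EG (f u) (f v) \<longleftrightarrow> EH u v))"

definition induced_biclaw_free :: "nat \<Rightarrow> nat \<Rightarrow> 'a set \<Rightarrow> ('a \<Rightarrow> 'a \<Rightarrow> bool) \<Rightarrow> bool" where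
  "induced_biclaw_free a b V E \<longleftrightarrow> \<not> induced_subgraph_of (biclaw_V a b) (biclaw_E a b) V E"

end

theory Submission
  imports Defs
begin

lemma pigeon_sum:
  fixes f :: "'a \<Rightarrow> nat"
  assumes "finite A" "A \<noteq> {}" "c * card A \<le> sum f A"
  shows "\<exists>y\<in>A. c \<le> f y"
proof (rule ccontr)
  assume "\<not> ?thesis"
  hence "\<forall>y\<in>A. f y < c" by auto
  hence "sum f A < sum (\<lambda>_. c) A" using assms(1,2) by (intro sum_strict_mono) auto
  thus False using assms(3) by (simp add: mult.commute)
qed

lemma card_filter_sum:
  assumes "finite R"
  shows "card {b\<in>R. P b} = (\<Sum>b\<in>R. if P b then 1 else 0)"
  using assms by (simp add: sum.inter_filter[symmetric])

lemma sum_card_swap: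
  assumes "finite P" "finite R"
  shows "(\<Sum>a\<in>P. card {b\<in>R. r a b}) = (\<Sum>b\<in>R. card {a\<in>P. r a b})"
proof -
  have "(\<Sum>a\<in>P. card {b\<in>R. r a b}) = (\<Sum>a\<in>P. \<Sum>b\<in>R. if r a b then 1 else 0)"
    using assms by (simp add: card_filter_sum)
  also have "\<dots> = (\<Sum>b\<in>R. \<Sum>a\<in>P. if r a b then 1 else 0)" by (rule sum.swap)
  also have "\<dots> = (\<Sum>b\<in>R. card {a\<in>P. r a b})"
    using assms by (simp add: card_filter_sum)
  finally show ?thesis .
qed

lemma lemZ:
  fixes Y :: "'a set" and M :: "'b set" and F :: "'b \<Rightarrow> 'a set" and m :: nat
  assumes fY: "finite Y" and fM: "finite M" and FY: "\<forall>p\<in>M. F p \<subseteq> Y"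
    and big: "\<forall>p\<in>M. card Y \<le> m * card (F p)" and m1: "1 \<le> m"
  shows "2*m*k \<le> card Y \<Longrightarrow> \<exists>T. T \<subseteq> Y \<and> card T = k \<and> card M \<le> card {p\<in>M. T \<subseteq> F p} * (2*m)^k"
proof (induction k)
  case 0
  show ?case by (rule exI[of _ "{}"]) auto
next
  case (Suc k)
  hence "2*m*k \<le> card Y" by simp
  then obtain T where T: "T \<subseteq> Y" "card T = k" "card M \<le> card {p\<in>M. T \<subseteq> F p} * (2*m)^k"
    using Suc.IH by blast
  define M' where "M' = {p\<in>M. T \<subseteq> F p}"
  have fM': "finite M'" using fM unfolding M'_def by simp
  have fT: "finite T" using T(1) fY finite_subset by blast
  have cYT: "card (Y - T) = card Y - k" using T fT by (simp add: card_Diff_subset)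
  have "1 * Suc k \<le> (2*m) * Suc k" by (rule mult_le_mono1) (use m1 in simp)
  hence kY: "k < card Y" using Suc.prems by (metis le_trans mult_1 Suc_le_eq)
  have ne: "Y - T \<noteq> {}"
  proof
    assume "Y - T = {}"
    hence "card (Y - T) = card ({}::'a set)" by (rule arg_cong)
    with cYT kY show False by simp
  qed
  have "\<exists>y\<in>Y - T. card M' \<le> 2*m * card {p\<in>M'. y \<in> F p}"
  proof (rule ccontr)
    assume "\<not> ?thesis"
    hence lt: "\<forall>y\<in>Y-T. 2*m * card {p\<in>M'. y \<in> F p} < card M'" by (meson not_le)
    have "(\<Sum>y\<in>Y-T. 2*m * card {p\<in>M'. y \<in> F p}) < (\<Sum>y\<in>Y-T. card M')"
      using lt ne fY by (intro sum_strict_mono) auto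
    also have "\<dots> = card M' * (card Y - k)" using cYT by simp
    finally have A: "2*m * (\<Sum>y\<in>Y-T. card {p\<in>M'. y \<in> F p}) < card M' * (card Y - k)"
      by (simp add: sum_distrib_left)
    have "(\<Sum>y\<in>Y-T. card {p\<in>M'. y \<in> F p}) = (\<Sum>p\<in>M'. card {y\<in>Y-T. y \<in> F p})"
      using sum_card_swap[OF fM', of "Y-T" "\<lambda>p y. y \<in> F p"] fY by simp
    also have "\<dots> = (\<Sum>p\<in>M'. card (F p - T))"
    proof (rule sum.cong)
      fix p assume "p \<in> M'"
      hence "F p \<subseteq> Y" using FY M'_def by auto
      hence "{y\<in>Y-T. y \<in> F p} = F p - T" by auto
      thus "card {y\<in>Y-T. y \<in> F p} = card (F p - T)" by simp
    qed simp
    finally have B: "(\<Sum>y\<in>Y-T. card {p\<in>M'. y \<in> F p}) = (\<Sum>p\<in>M'. card (F p - T))" .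
    have C: "card Y - m*k \<le> m * card (F p - T)" if "p \<in> M'" for p
    proof -
      have "card (F p) - k \<le> card (F p - T)"
        using fT T(2) by (metis card_Diff_subset_Int card_mono diff_le_mono2 Int_lower2 finite_Int) 
      hence "m * (card (F p) - k) \<le> m * card (F p - T)" by simp
      moreover have "card Y \<le> m * card (F p)" using big that M'_def by auto
      ultimately show ?thesis by (simp add: diff_mult_distrib2)
    qed
    have "card M' * (card Y - m*k) \<le> m * (\<Sum>p\<in>M'. card (F p - T))"
    proof -
      have "card M' * (card Y - m*k) = (\<Sum>p\<in>M'. card Y - m*k)" by simp
      also have "\<dots> \<le> (\<Sum>p\<in>M'. m * card (F p - T))" using C by (intro sum_mono) auto
      finally show ?thesis by (simp add: sum_distrib_left)
    qed
    hence "2 * (card M' * (card Y - m*k)) \<le> 2*m * (\<Sum>y\<in>Y-T. card {p\<in>M'. y \<in> F p})"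
      using B by simp
    with A have "2 * (card M' * (card Y - m*k)) < card M' * (card Y - k)" by linarith
    moreover have "card Y - k \<le> 2 * (card Y - m*k)"
      using Suc.prems by (simp add: algebra_simps)
    ultimately show False
      by (metis mult.left_commute mult_le_mono2 not_le)
  qed
  then obtain y where y: "y \<in> Y - T" "card M' \<le> 2*m * card {p\<in>M'. y \<in> F p}" by blast
  have eq: "{p\<in>M. insert y T \<subseteq> F p} = {p\<in>M'. y \<in> F p}" unfolding M'_def by auto
  show ?case
  proof (intro exI conjI)
    show "insert y T \<subseteq> Y" using y T by auto
    show "card (insert y T) = Suc k" using y T fT by simp
    have "card M \<le> card M' * (2*m)^k" using T M'_def by simp
    also have "\<dots> \<le> 2*m * card {p\<in>M'. y \<in> F p} * (2*m)^k" using y by simp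
    also have "\<dots> = card {p\<in>M. insert y T \<subseteq> F p} * (2*m)^Suc k" using eq by simp
    finally show "card M \<le> card {p\<in>M. insert y T \<subseteq> F p} * (2*m)^Suc k" .
  qed
qed

lemma sg_sym: "simple_graph V E \<Longrightarrow> E a b \<Longrightarrow> E b a"
  unfolding simple_graph_def by blast
lemma sg_irr: "simple_graph V E \<Longrightarrow> \<not> E a a"
  unfolding simple_graph_def by blast
lemma sg_V: "simple_graph V E \<Longrightarrow> E a b \<Longrightarrow> a \<in> V \<and> b \<in> V"
  unfolding simple_graph_def by blast
lemma sg_fin: "simple_graph V E \<Longrightarrow> finite V"
  unfolding simple_graph_def by blast
lemma nb_iff: "simple_graph V E \<Longrightarrow> x \<in> neighbours V E y \<longleftrightarrow> E y x"
  unfolding neighbours_def simple_graph_def by blast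
lemma nb_sub: "neighbours V E y \<subseteq> V"
  unfolding neighbours_def by blast
lemma nb_fin: "simple_graph V E \<Longrightarrow> finite (neighbours V E y)"
  using nb_sub sg_fin finite_subset by metis

lemma mem_bV[simp]:
  "BX \<in> biclaw_V a b" "BY \<in> biclaw_V a b"
  "BXi i \<in> biclaw_V a b \<longleftrightarrow> 1 \<le> i \<and> i \<le> a"
  "BYj j \<in> biclaw_V a b \<longleftrightarrow> 1 \<le> j \<and> j \<le> b"
  unfolding biclaw_V_def by auto

lemma E0_simps[simp]:
  "biclaw_E0 BX BY" "biclaw_E0 BX (BYj j)" "biclaw_E0 BY (BXi i)"
  "\<not> biclaw_E0 BX BX" "\<not> biclaw_E0 BX (BXi i)" "\<not> biclaw_E0 BY BX" "\<not> biclaw_E0 BY BY"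
  "\<not> biclaw_E0 BY (BYj j)" "\<not> biclaw_E0 (BXi i) z" "\<not> biclaw_E0 (BYj j) z"
  unfolding biclaw_E0_def by auto

lemma biclaw_from:
  assumes sg: "simple_graph V E"
    and tf: "\<And>a b c. E a c \<Longrightarrow> E b c \<Longrightarrow> \<not> E a b"
    and uv: "E u v"
    and S: "S \<subseteq> neighbours V E u - {v}" "card S = t"
    and T: "T \<subseteq> neighbours V E v - {u}" "card T = t"
    and ST: "\<forall>s\<in>S. \<forall>x\<in>T. \<not> E s x"
  shows "induced_subgraph_of (biclaw_V t t) (biclaw_E t t) V E"
proof -
  have fS: "finite S" using S(1) nb_fin[OF sg] finite_subset by blast
  have fT: "finite T" using T(1) nb_fin[OF sg] finite_subset by blast
  obtain gS where gS: "bij_betw gS {1..t} S" using ex_bij_betw_nat_finite_1[OF fS] unfolding S(2) by blast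
  obtain gT where gT: "bij_betw gT {1..t} T" using ex_bij_betw_nat_finite_1[OF fT] unfolding T(2) by blast
  have sym: "\<And>a b. E a b \<Longrightarrow> E b a" using sg_sym[OF sg] .
  have irr: "\<And>a. \<not> E a a" using sg_irr[OF sg] .
  have Su: "\<And>s. s \<in> S \<Longrightarrow> E u s \<and> s \<noteq> v \<and> s \<in> V" using S(1) unfolding neighbours_def by blast
  have Tv: "\<And>x. x \<in> T \<Longrightarrow> E v x \<and> x \<noteq> u \<and> x \<in> V" using T(1) unfolding neighbours_def by blast
  have uV: "u \<in> V" "v \<in> V" using sg_V[OF sg uv] by auto
  have n1: "\<not> E u x \<and> \<not> E x u" if "x \<in> T" for x
  proof -
    have "E x v" using Tv[OF that] sym by blast
    thus ?thesis using tf[where a=u and b=v and c=x] uv sym by blast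
  qed
  have n2: "\<not> E v s \<and> \<not> E s v" if "s \<in> S" for s
  proof -
    have "E s u" using Su[OF that] sym by blast
    thus ?thesis using tf[where a=v and b=u and c=s] uv sym by blast
  qed
  have n3: "\<not> E s s'" if "s \<in> S" "s' \<in> S" for s s'
  proof -
    have "E s u" "E s' u" using Su that sym by blast+
    thus ?thesis using tf[where a=s and b=s' and c=u] by blast
  qed
  have n4: "\<not> E x x'" if "x \<in> T" "x' \<in> T" for x x'
  proof -
    have "E x v" "E x' v" using Tv that sym by blast+
    thus ?thesis using tf[where a=x and b=x' and c=v] by blast
  qed
  have n5: "\<not> E s x \<and> \<not> E x s" if "s \<in> S" "x \<in> T" for s x
    using ST that sym by blast
  have d1: "u \<noteq> v" using uv irr by blast
  have d2: "s \<noteq> u" if "s \<in> S" for s using Su[OF that] irr by blast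
  have d3: "x \<noteq> v" if "x \<in> T" for x using Tv[OF that] irr by blast
  have d4: "s \<notin> T" if "s \<in> S" for s
  proof
    assume "s \<in> T"
    hence "E s v" using Tv sym by blast
    moreover have "E s u" using Su[OF that] sym by blast
    ultimately show False using tf[where a=u and b=v and c=s] uv sym by blast
  qed
  have gSi: "\<And>i. i \<in> {1..t} \<Longrightarrow> gS i \<in> S" using gS bij_betw_apply by metis
  have gTi: "\<And>i. i \<in> {1..t} \<Longrightarrow> gT i \<in> T" using gT bij_betw_apply by metis
  have gSinj: "\<And>i j. i \<in> {1..t} \<Longrightarrow> j \<in> {1..t} \<Longrightarrow> gS i = gS j \<Longrightarrow> i = j"
    using gS unfolding bij_betw_def inj_on_def by blast
  have gTinj: "\<And>i j. i \<in> {1..t} \<Longrightarrow> j \<in> {1..t} \<Longrightarrow> gT i = gT j \<Longrightarrow> i = j"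
    using gT unfolding bij_betw_def inj_on_def by blast
  have G1: "gS i \<in> S" "gT i \<in> T" if "1 \<le> i" "i \<le> t" for i using gSi gTi that by auto
  have G2: "gS i \<noteq> u" "gS i \<noteq> v" "gT i \<noteq> u" "gT i \<noteq> v" "u \<noteq> gS i" "v \<noteq> gS i"
     "u \<noteq> gT i" "v \<noteq> gT i" if "1 \<le> i" "i \<le> t" for i
    using d2[OF G1(1)[OF that]] Su[OF G1(1)[OF that]] Tv[OF G1(2)[OF that]] d3[OF G1(2)[OF that]]
    by auto
  have G3: "gS i \<noteq> gT j" "gT j \<noteq> gS i" if "1 \<le> i" "i \<le> t" "1 \<le> j" "j \<le> t" for i j
    using d4[OF G1(1)[OF that(1,2)]] G1(2)[OF that(3,4)] by auto
  have G4: "gS i = gS j \<longleftrightarrow> i = j" "gT i = gT j \<longleftrightarrow> i = j"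
    if "1 \<le> i" "i \<le> t" "1 \<le> j" "j \<le> t" for i j
    using inj_on_eq_iff[OF bij_betw_imp_inj_on[OF gS]] inj_on_eq_iff[OF bij_betw_imp_inj_on[OF gT]] that
    by auto
  define f where "f = (\<lambda>z. case z of BX \<Rightarrow> u | BY \<Rightarrow> v | BXi i \<Rightarrow> gT i | BYj j \<Rightarrow> gS j)"
  have inj: "inj_on f (biclaw_V t t)"
  proof (rule inj_onI)
    fix p q assume p: "p \<in> biclaw_V t t" and q: "q \<in> biclaw_V t t" and eq: "f p = f q"
    show "p = q"
      using p q eq d1 G2 G3 G4
      by (cases p; cases q) (simp_all add: f_def)
  qed
  have img: "f ` biclaw_V t t \<subseteq> V"
    using uV Su Tv gSi gTi by (auto simp: f_def biclaw_V_def)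
  have adj: "\<forall>p\<in>biclaw_V t t. \<forall>q\<in>biclaw_V t t. E (f p) (f q) \<longleftrightarrow> biclaw_E t t p q"
  proof (intro ballI)
    fix p q assume p: "p \<in> biclaw_V t t" and q: "q \<in> biclaw_V t t"
    show "E (f p) (f q) \<longleftrightarrow> biclaw_E t t p q"
    proof -
      have H: "E u v" "E v u" "\<not> E u u" "\<not> E v v" using uv sym irr by auto
      have H1: "E u (gS j)" "E (gS j) u" "\<not> E v (gS j)" "\<not> E (gS j) v" if "1 \<le> j" "j \<le> t" for j
        using Su[OF G1(1)[OF that]] sym n2[OF G1(1)[OF that]] by auto
      have H2: "E v (gT j)" "E (gT j) v" "\<not> E u (gT j)" "\<not> E (gT j) u" if "1 \<le> j" "j \<le> t" for j
        using Tv[OF G1(2)[OF that]] sym n1[OF G1(2)[OF that]] by auto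
      have H3: "\<not> E (gS i) (gS j)" "\<not> E (gT i) (gT j)" "\<not> E (gS i) (gT j)" "\<not> E (gT j) (gS i)"
        if "1 \<le> i" "i \<le> t" "1 \<le> j" "j \<le> t" for i j
        using n3[OF G1(1)[OF that(1,2)] G1(1)[OF that(3,4)]] n4[OF G1(2)[OF that(1,2)] G1(2)[OF that(3,4)]]
          n5[OF G1(1)[OF that(1,2)] G1(2)[OF that(3,4)]] by auto
      show ?thesis using p q H H1 H2 H3
        by (cases p; cases q) (simp_all add: f_def biclaw_E_def)
    qed
  qed
  show ?thesis unfolding induced_subgraph_of_def using inj img adj by blast
qed

lemma lemL:
  assumes sg: "simple_graph V E"
    and tf: "\<And>a b c. E a c \<Longrightarrow> E b c \<Longrightarrow> \<not> E a b"
    and free: "induced_biclaw_free t t V E"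
    and uv: "E u v" and m1: "1 \<le> m"
    and dv: "2*t*m + 1 \<le> degree V E v"
  shows "card {w \<in> neighbours V E u. degree V E v + m < m * card (neighbours V E v - neighbours V E w)}
           < t * (2*m)^t"
proof (rule ccontr)
  let ?N = "neighbours V E"
  define M where "M = {w \<in> ?N u. degree V E v + m < m * card (?N v - ?N w)}"
  define Y where "Y = ?N v - {u}"
  define F where "F = (\<lambda>w. Y - ?N w)"
  assume "\<not> card M < t * (2*m)^t"
  hence cM: "t * (2*m)^t \<le> card M" using M_def by simp
  have fN: "\<And>y. finite (?N y)" using nb_fin[OF sg] .
  have uN: "u \<in> ?N v" using nb_iff[OF sg] sg_sym[OF sg uv] by blast
  have fY: "finite Y" using fN Y_def by simp
  have cY: "card Y = degree V E v - 1" using uN fN unfolding Y_def degree_def by simp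
  have fM: "finite M" using fN M_def by simp
  have FY: "\<forall>p\<in>M. F p \<subseteq> Y" using F_def by auto
  have big: "\<forall>p\<in>M. card Y \<le> m * card (F p)"
  proof
    fix p assume p: "p \<in> M"
    have "?N v - ?N p \<subseteq> insert u (F p)" unfolding F_def Y_def by auto
    hence "card (?N v - ?N p) \<le> card (insert u (F p))" using fN by (intro card_mono) (auto simp: F_def Y_def)
    also have "\<dots> \<le> Suc (card (F p))" by (simp add: card_insert_le_m1)
    finally have "m * card (?N v - ?N p) \<le> m * card (F p) + m" by (metis mult_Suc_right mult_le_mono2 add.commute)
    moreover have "degree V E v + m < m * card (?N v - ?N p)" using p M_def by simp
    ultimately show "card Y \<le> m * card (F p)" using cY by linarith
  qed
  have "2*m*t \<le> card Y" using cY dv by (simp add: mult.commute mult.left_commute)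
  from lemZ[OF fY fM FY big m1 this] obtain T where
    T: "T \<subseteq> Y" "card T = t" "card M \<le> card {p\<in>M. T \<subseteq> F p} * (2*m)^t" by blast
  have "t * (2*m)^t \<le> card {p\<in>M. T \<subseteq> F p} * (2*m)^t" using cM T(3) by linarith
  moreover have "0 < (2*m)^t" using m1 by simp
  ultimately have "t \<le> card {p\<in>M. T \<subseteq> F p}" using m1 by simp
  then obtain S where S: "S \<subseteq> {p\<in>M. T \<subseteq> F p}" "card S = t" by (meson obtain_subset_with_card_n)
  have vM: "v \<notin> M" using M_def by simp
  have S1: "S \<subseteq> ?N u - {v}" using S(1) vM M_def by auto
  have T1: "T \<subseteq> ?N v - {u}" using T(1) Y_def by simp
  have ST: "\<forall>s\<in>S. \<forall>x\<in>T. \<not> E s x"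
  proof (intro ballI)
    fix s x assume s: "s \<in> S" and x: "x \<in> T"
    hence "x \<in> Y - ?N s" using S(1) F_def by auto
    thus "\<not> E s x" using Y_def nb_iff[OF sg] nb_sub by blast
  qed
  have "induced_subgraph_of (biclaw_V t t) (biclaw_E t t) V E"
    by (rule biclaw_from[OF sg tf uv S1 S(2) T1 T(2) ST])
  thus False using free unfolding induced_biclaw_free_def by blast
qed

lemma ar_base:
  fixes m D K :: nat
  assumes m: "16 \<le> m" and D: "6*K + 2 \<le> D"
  shows "D + m + 3*(m*K) \<le> m*D"
proof -
  have a: "(m-1)*(6*K+2) \<le> (m-1)*D" using D by (rule mult_le_mono2)
  have b: "(m-1)*(6*K+2) = 6*((m-1)*K) + 2*(m-1)" by (simp add: algebra_simps)
  have c: "3*(m*K) \<le> 6*((m-1)*K)"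
  proof -
    have "3*m \<le> 6*(m-1)" using m by simp
    hence "3*m*K \<le> 6*(m-1)*K" by (rule mult_le_mono1)
    thus ?thesis by (simp add: mult.assoc)
  qed
  have e: "m*D = D + (m-1)*D" using m by (cases m) simp_all
  have f: "m - 1 + 1 = m" using m by simp
  show ?thesis using a b c e f m by linarith
qed

lemma ar1:
  fixes m D K R :: nat
  assumes m: "16 \<le> m" and D: "6*K + 2 \<le> D" and R: "m*R \<le> D + m + m*K"
  shows "R + 2*K \<le> D"
proof -
  have "m*(R + 2*K) = m*R + 2*(m*K)" by (simp add: algebra_simps)
  also have "\<dots> \<le> D + m + 3*(m*K)" using R by linarith
  also have "\<dots> \<le> m*D" using ar_base[OF m D] by simp
  finally show ?thesis using m by simp
qed

lemma ar2:
  fixes m D K :: nat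
  assumes m: "16 \<le> m" and D: "6*K + 2 \<le> D"
  shows "D + m + m*K < m*D"
proof -
  have "D + m + 3*(m*K) \<le> m*D" by (rule ar_base[OF m D])
  moreover have "m*K \<le> 3*(m*K)" by simp
  ultimately have "D + m + m*K \<le> m*D" by linarith
  moreover have "D + m + m*K \<noteq> m*D"
  proof
    assume h: "D + m + m*K = m*D"
    have "(m-1)*(6*K+2) \<le> (m-1)*D" using D by (rule mult_le_mono2)
    moreover have "(m-1)*(6*K+2) = 6*((m-1)*K) + 2*(m-1)" by (simp add: algebra_simps)
    moreover have "m*K \<le> 6*((m-1)*K)"
    proof -
      have "m \<le> 6*(m-1)" using m by simp
      hence "m*K \<le> 6*(m-1)*K" by (rule mult_le_mono1)
      thus ?thesis by (simp add: mult.assoc)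
    qed
    moreover have "m*D = D + (m-1)*D" using m by (cases m) simp_all
    moreover have "m - 1 + 1 = m" using m by simp
    ultimately show False using h m by linarith
  qed
  ultimately show ?thesis by linarith
qed

lemma ar3:
  fixes m D K R d :: nat
  assumes m: "16 \<le> m" and D: "6*K + 2 \<le> D" and K: "1 \<le> K" and dD: "d \<le> D"
    and R: "m*R \<le> D + m + m*K"
  shows "d \<le> 2*(D - R)"
proof -
  have "16*R \<le> m*R" using m by (rule mult_le_mono1)
  have "m*(16*R) = 16*(m*R)" by simp
  also have "\<dots> \<le> 16*D + 16*m + 16*(m*K)" using R by linarith
  also have "\<dots> \<le> m*D + 16*m + 16*(m*K)" using mult_le_mono1[OF m, of D] by linarith
  also have "\<dots> \<le> m*(D + 16 + 16*K)" by (simp add: algebra_simps)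
  finally have "16*R \<le> D + 16 + 16*K" using m by (metis mult_le_cancel1 not_numeral_le_zero le0 le_antisym less_numeral_extra(3) not_gr0)
  thus ?thesis using D K dD by linarith
qed

lemma ar4:
  fixes m D :: nat
  assumes m: "16 \<le> m" and D: "m \<le> D"
  shows "24*D + m*m < 7*(m*D)"
proof -
  have a: "m*m \<le> m*D" using D by (rule mult_le_mono2)
  have b: "16*D \<le> m*D" using m by (rule mult_le_mono1)
  have c: "0 < D" using m D by simp
  show ?thesis using a b c by linarith
qed

definition Kc :: "nat \<Rightarrow> nat \<Rightarrow> nat" where "Kc t m = t * (2*m)^t"

locale bg =
  fixes V :: "'a set" and E :: "'a \<Rightarrow> 'a \<Rightarrow> bool" and t m d :: nat
  assumes sg: "simple_graph V E"
    and tf: "\<And>a b c. E a c \<Longrightarrow> E b c \<Longrightarrow> \<not> E a b"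
    and free: "induced_biclaw_free t t V E"
    and tpos: "0 < t"
    and m16: "16 \<le> m"
    and mindeg: "min_degree_ge V E d"
    and dbig: "2*t*m + 6*Kc t m + m + 2 \<le> d"
begin

abbreviation "N \<equiv> neighbours V E"
abbreviation "deg \<equiv> degree V E"
abbreviation "K \<equiv> Kc t m"

lemma K1: "1 \<le> K" using tpos m16 unfolding Kc_def by simp

lemma degV: "v \<in> V \<Longrightarrow> d \<le> deg v" using mindeg unfolding min_degree_ge_def by blast

lemma finN: "finite (N v)" using nb_fin[OF sg] .
lemma finV: "finite V" using sg_fin[OF sg] .
lemma inN: "w \<in> N u \<longleftrightarrow> E u w" using nb_iff[OF sg] .
lemma symE: "E a b \<Longrightarrow> E b a" using sg_sym[OF sg] .
lemma EV: "E a b \<Longrightarrow> a \<in> V \<and> b \<in> V" using sg_V[OF sg] .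
lemma NV: "N u \<subseteq> V" using nb_sub .

lemma d_ge: "2*t*m + 1 \<le> d" "6*K + 2 \<le> d" "2*K + m \<le> d" "2*m \<le> d" "m \<le> d"
proof -
  have "2*m \<le> 2*t*m" using tpos by simp
  thus "2*t*m + 1 \<le> d" "6*K + 2 \<le> d" "2*K + m \<le> d" "2*m \<le> d" "m \<le> d" using dbig by linarith+
qed

lemma badL:
  assumes "E u v"
  shows "card {w \<in> N u. deg v + m < m * card (N v - N w)} < K"
proof -
  have "v \<in> V" using EV assms by blast
  hence "2*t*m + 1 \<le> deg v" using degV d_ge by (meson le_trans)
  thus ?thesis using lemL[OF sg tf free assms _ ] m16 unfolding Kc_def by simp
qed

lemma goodL:
  assumes "E u v" "Z \<subseteq> N u" "K \<le> card Z"
  shows "\<exists>w\<in>Z. m * card (N v - N w) \<le> deg v + m"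
proof (rule ccontr)
  assume "\<not> ?thesis"
  hence "Z \<subseteq> {w \<in> N u. deg v + m < m * card (N v - N w)}" using assms(2) by (auto simp: not_le)
  hence "card Z \<le> card {w \<in> N u. deg v + m < m * card (N v - N w)}"
    using finN by (intro card_mono) auto
  thus False using badL[OF assms(1)] assms(3) by linarith
qed

lemma goodC:
  assumes "E u v" "\<And>w. w \<in> N u \<Longrightarrow> m * card (N v - N w) \<le> deg v + m \<Longrightarrow> w \<in> G"
  shows "card (N u - G) < K"
proof -
  have "N u - G \<subseteq> {w \<in> N u. deg v + m < m * card (N v - N w)}"
  proof
    fix w assume "w \<in> N u - G"
    thus "w \<in> {w \<in> N u. deg v + m < m * card (N v - N w)}" using assms(2)[of w] by (auto simp: not_le[symmetric])
  qed
  hence "card (N u - G) \<le> card {w \<in> N u. deg v + m < m * card (N v - N w)}"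
    using finN by (intro card_mono) auto
  thus ?thesis using badL[OF assms(1)] by linarith
qed

lemma propG:
  assumes aV: "a \<in> V" and R: "card (N a - S2) \<le> R" and Rd: "R + 2*K \<le> deg a"
    and S2: "\<forall>w\<in>S2. card (N w - S1) < K" and ab: "E a b"
  shows "m * card (N b - S1) \<le> deg b + m + m*K"
proof -
  have "card (N a) \<le> card (N a \<inter> S2) + card (N a - S2)"
    by (metis card_Un_le Int_Diff_Un)
  hence "K \<le> card (N a \<inter> S2)" using R Rd unfolding degree_def by linarith
  then obtain w where w: "w \<in> N a \<inter> S2" "m * card (N b - N w) \<le> deg b + m"
    using goodL[OF ab, of "N a \<inter> S2"] by blast
  have "N b - S1 \<subseteq> (N b - N w) \<union> (N w - S1)" by auto
  hence "card (N b - S1) \<le> card ((N b - N w) \<union> (N w - S1))" using finN by (intro card_mono) auto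
  also have "\<dots> \<le> card (N b - N w) + card (N w - S1)" by (rule card_Un_le)
  finally have "m * card (N b - S1) \<le> m * card (N b - N w) + m * card (N w - S1)"
    by (metis add_mult_distrib2 mult_le_mono2)
  moreover have "m * card (N w - S1) \<le> m * K" using S2 w(1) by (intro mult_le_mono2) (auto simp: less_imp_le)
  ultimately show ?thesis using w(2) by linarith
qed

end


locale bgx = bg +
  fixes x
  assumes xV: "x \<in> V" and xmax: "\<forall>v\<in>V. deg v \<le> deg x"
begin

abbreviation "D \<equiv> deg x"
definition "Q = N x"
definition "A1 = {a\<in>V. m*card (Q - N a) \<le> D + m}"
definition "Qp = {q\<in>Q. m*card (A1 - N q) \<le> 8*card A1}"
definition "SA = {a\<in>V. m*card (Q - N a) \<le> 3*D}"
definition "SB = {b\<in>V. m*card (A1 - N b) \<le> 10*card A1}"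
definition "TA = {a\<in>V. m*card (N a - SB) \<le> deg a + m + m*K}"
definition "TB = {b\<in>V. m*card (N b - SA) \<le> deg b + m + m*K}"

lemma D_ge: "d \<le> D" "m \<le> D" "2*m \<le> D" "6*K+2 \<le> D"
  using degV[OF xV] d_ge by linarith+

lemma cardQ: "card Q = D" unfolding Q_def degree_def ..

lemma finQ: "finite Q" unfolding Q_def using finN .
lemma QV: "Q \<subseteq> V" unfolding Q_def using NV .
lemma finA1: "finite A1" unfolding A1_def using finV by simp
lemma A1V: "A1 \<subseteq> V" unfolding A1_def by blast
lemma degle: "v \<in> V \<Longrightarrow> deg v \<le> D" using xmax by blast

lemma x_A1: "x \<in> A1"
  unfolding A1_def Q_def using xV by simp

lemma Kq: "q \<in> Q \<Longrightarrow> card (N q - A1) < K"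
proof -
  assume q: "q \<in> Q"
  hence "E q x" using inN symE unfolding Q_def by blast
  thus ?thesis
  proof (rule goodC)
    fix w assume "w \<in> N q" "m * card (N x - N w) \<le> deg x + m"
    thus "w \<in> A1" unfolding A1_def Q_def using NV by blast
  qed
qed

lemma degq: "q \<in> Q \<Longrightarrow> deg q \<le> card A1 + K"
proof -
  assume q: "q \<in> Q"
  have "card (N q) \<le> card (N q \<inter> A1) + card (N q - A1)"
    by (metis card_Un_le Int_Diff_Un)
  moreover have "card (N q \<inter> A1) \<le> card A1" using finA1 finN by (intro card_mono) auto
  ultimately show ?thesis using Kq[OF q] unfolding degree_def by linarith
qed

lemma A1big: "K + m \<le> card A1"
proof -
  have "Q \<noteq> {}" using cardQ D_ge(1) d_ge(1) by (metis card.empty le_zero_eq add_is_0 one_neq_zero)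
  then obtain q where q: "q \<in> Q" by blast
  hence "d \<le> deg q" using QV degV by blast
  thus ?thesis using degq[OF q] d_ge(3) by linarith
qed

lemma K2: "8*card (Q - Qp) \<le> D + m"
proof -
  have swap: "(\<Sum>a\<in>A1. card {q\<in>Q. \<not> E a q}) = (\<Sum>q\<in>Q. card {a\<in>A1. \<not> E a q})"
    by (rule sum_card_swap[OF finA1 finQ])
  have e1: "{q\<in>Q. \<not> E a q} = Q - N a" for a using QV unfolding neighbours_def by blast
  have e2: "{a\<in>A1. \<not> E a q} = A1 - N q" for q using A1V symE unfolding neighbours_def by blast
  have L: "m * (\<Sum>a\<in>A1. card (Q - N a)) \<le> card A1 * (D + m)"
  proof -
    have "m * (\<Sum>a\<in>A1. card (Q - N a)) = (\<Sum>a\<in>A1. m * card (Q - N a))" by (simp add: sum_distrib_left)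
    also have "\<dots> \<le> (\<Sum>a\<in>A1. D + m)" by (intro sum_mono) (simp add: A1_def)
    finally show ?thesis by simp
  qed
  have R: "card (Q - Qp) * (8 * card A1) \<le> m * (\<Sum>q\<in>Q. card (A1 - N q))"
  proof -
    have "card (Q - Qp) * (8 * card A1) = (\<Sum>q\<in>Q - Qp. 8 * card A1)" by simp
    also have "\<dots> \<le> (\<Sum>q\<in>Q - Qp. m * card (A1 - N q))"
      by (intro sum_mono) (auto simp: Qp_def)
    also have "\<dots> \<le> (\<Sum>q\<in>Q. m * card (A1 - N q))"
      using finQ by (intro sum_mono2) auto
    finally show ?thesis by (simp add: sum_distrib_left)
  qed
  have "(\<Sum>a\<in>A1. card (Q - N a)) = (\<Sum>q\<in>Q. card (A1 - N q))" using swap e1 e2 by simp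
  hence "m * (\<Sum>a\<in>A1. card (Q - N a)) = m * (\<Sum>q\<in>Q. card (A1 - N q))" by simp
  hence "card (Q - Qp) * (8 * card A1) \<le> card A1 * (D + m)" using L R by linarith
  hence "card A1 * (8 * card (Q - Qp)) \<le> card A1 * (D + m)" by (simp add: algebra_simps)
  moreover have "0 < card A1" using A1big K1 by linarith
  ultimately show ?thesis by simp
qed

lemma A1_SA: "A1 \<subseteq> SA"
  unfolding A1_def SA_def using D_ge by auto

lemma SA_i: "a \<in> SA \<Longrightarrow> card (N a - SB) < K"
proof -
  assume a: "a \<in> SA"
  have c1: "m * card (Q - N a) \<le> 3*D" using a SA_def by simp
  have c2: "8*card (Q - Qp) \<le> D + m" by (rule K2)
  have "card (Q - N a) + card (Q - Qp) < D"
  proof -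
    have "m * (8 * (card (Q - N a) + card (Q - Qp))) = 8 * (m * card (Q - N a)) + m * (8*card (Q - Qp))"
      by (simp add: algebra_simps)
    also have "\<dots> \<le> 24*D + m * (D + m)" using c1 mult_le_mono2[OF c2, of m] by linarith
    also have "\<dots> = 24*D + m*m + m*D" by (simp add: algebra_simps)
    also have "\<dots> < 8*(m*D)" using ar4[OF m16 D_ge(2)] by linarith
    also have "\<dots> = m * (8*D)" by simp
    finally show ?thesis by simp
  qed
  then obtain q where q: "q \<in> Qp" "q \<in> N a"
  proof -
    assume h: "\<And>q. q \<in> Qp \<Longrightarrow> q \<in> N a \<Longrightarrow> thesis"
    show thesis
    proof (rule ccontr)
      assume "\<not> thesis"
      hence "Q \<subseteq> (Q - N a) \<union> (Q - Qp)" using h by blast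
      hence "card Q \<le> card ((Q - N a) \<union> (Q - Qp))" using finQ by (intro card_mono) auto
      also have "\<dots> \<le> card (Q - N a) + card (Q - Qp)" by (rule card_Un_le)
      finally show False using \<open>card (Q - N a) + card (Q - Qp) < D\<close> cardQ by linarith
    qed
  qed
  have qQ: "q \<in> Q" using q Qp_def by simp
  have aq: "E a q" using q(2) inN by blast
  show ?thesis
  using aq proof (rule goodC)
    fix w assume w: "w \<in> N a" "m * card (N q - N w) \<le> deg q + m"
    have "A1 - N w \<subseteq> (A1 - N q) \<union> (N q - N w)" by auto
    hence "card (A1 - N w) \<le> card ((A1 - N q) \<union> (N q - N w))" using finA1 finN by (intro card_mono) auto
    also have "\<dots> \<le> card (A1 - N q) + card (N q - N w)" by (rule card_Un_le)
    finally have "m * card (A1 - N w) \<le> m * card (A1 - N q) + m * card (N q - N w)"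
      by (metis add_mult_distrib2 mult_le_mono2)
    moreover have "m * card (A1 - N q) \<le> 8 * card A1" using q(1) Qp_def by simp
    moreover have "deg q \<le> card A1 + K" by (rule degq[OF qQ])
    ultimately have "m * card (A1 - N w) \<le> 10 * card A1" using w(2) A1big by linarith
    thus "w \<in> SB" unfolding SB_def using w(1) NV by blast
  qed
qed

lemma SB_i: "b \<in> SB \<Longrightarrow> card (N b - SA) < K"
proof -
  assume b: "b \<in> SB"
  have c: "m * card (A1 - N b) \<le> 10 * card A1" using b SB_def by simp
  obtain a where a: "a \<in> A1" "a \<in> N b"
  proof (rule ccontr)
    assume h: "\<not> thesis"
    have "A1 - N b = A1" using h that by blast
    hence "m * card A1 \<le> 10 * card A1" using c by simp
    moreover have "0 < card A1" using A1big K1 by linarith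
    ultimately show False using m16 by simp
  qed
  have ba: "E b a" using a(2) inN by blast
  have aV: "a \<in> V" using a(1) A1V by blast
  show ?thesis
  using ba proof (rule goodC)
    fix w assume w: "w \<in> N b" "m * card (N a - N w) \<le> deg a + m"
    have "Q - N w \<subseteq> (Q - N a) \<union> (N a - N w)" by auto
    hence "card (Q - N w) \<le> card ((Q - N a) \<union> (N a - N w))" using finQ finN by (intro card_mono) auto
    also have "\<dots> \<le> card (Q - N a) + card (N a - N w)" by (rule card_Un_le)
    finally have "m * card (Q - N w) \<le> m * card (Q - N a) + m * card (N a - N w)"
      by (metis add_mult_distrib2 mult_le_mono2)
    moreover have "m * card (Q - N a) \<le> D + m" using a(1) A1_def by simp
    moreover have "deg a \<le> D" using degle[OF aV] .
    ultimately have "m * card (Q - N w) \<le> 3 * D" using w(2) D_ge by linarith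
    thus "w \<in> SA" unfolding SA_def using w(1) NV by blast
  qed
qed


lemma SA_TA: "SA \<subseteq> TA"
proof
  fix a assume a: "a \<in> SA"
  have "card (N a - SB) \<le> K" using SA_i[OF a] by simp
  hence "m * card (N a - SB) \<le> m * K" by (rule mult_le_mono2)
  hence "m * card (N a - SB) \<le> deg a + m + m * K" by linarith
  thus "a \<in> TA" using a unfolding TA_def SA_def by simp
qed

lemma SB_TB: "SB \<subseteq> TB"
proof
  fix b assume b: "b \<in> SB"
  have "card (N b - SA) \<le> K" using SB_i[OF b] by simp
  hence "m * card (N b - SA) \<le> m * K" by (rule mult_le_mono2)
  hence "m * card (N b - SA) \<le> deg b + m + m * K" by linarith
  thus "b \<in> TB" using b unfolding TB_def SB_def by simp
qed

lemma TA_TB: "a \<in> TA \<Longrightarrow> E a b \<Longrightarrow> b \<in> TB"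
proof -
  assume a: "a \<in> TA" and ab: "E a b"
  have aV: "a \<in> V" using a TA_def by simp
  have "m * card (N a - SB) \<le> deg a + m + m*K" using a TA_def by simp
  moreover have "6*K + 2 \<le> deg a" using degV[OF aV] d_ge by linarith
  ultimately have "card (N a - SB) + 2*K \<le> deg a" using ar1[OF m16] by blast
  hence "m * card (N b - SA) \<le> deg b + m + m*K"
    using propG[of a SB "card (N a - SB)" SA b] aV ab SB_i by blast
  thus "b \<in> TB" unfolding TB_def using EV[OF ab] by blast
qed

lemma TB_TA: "b \<in> TB \<Longrightarrow> E b a \<Longrightarrow> a \<in> TA"
proof -
  assume b: "b \<in> TB" and ba: "E b a"
  have bV: "b \<in> V" using b TB_def by simp
  have "m * card (N b - SA) \<le> deg b + m + m*K" using b TB_def by simp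
  moreover have "6*K + 2 \<le> deg b" using degV[OF bV] d_ge by linarith
  ultimately have "card (N b - SA) + 2*K \<le> deg b" using ar1[OF m16] by blast
  hence "m * card (N a - SB) \<le> deg a + m + m*K"
    using propG[of b SA "card (N b - SA)" SB a] bV ba SA_i by blast
  thus "a \<in> TA" unfolding TA_def using EV[OF ba] by blast
qed

lemma all_T:
  assumes conn: "connected_graph V E"
  shows "V \<subseteq> TA \<union> TB"
proof
  fix v assume v: "v \<in> V"
  have "(\<lambda>a b. a \<in> V \<and> b \<in> V \<and> E a b)\<^sup>*\<^sup>* x v" using conn xV v unfolding connected_graph_def by blast
  thus "v \<in> TA \<union> TB"
  proof (induction rule: rtranclp_induct)
    case base
    show ?case using x_A1 A1_SA SA_TA by blast
  next
    case (step y z)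
    thus ?case using TA_TB TB_TA by blast
  qed
qed

lemma count_gen:
  assumes fD: "finite D0" and dis: "D0 \<inter> S1 = {}" and fS2: "finite S2"
    and lo: "\<forall>a\<in>D0. d \<le> 2 * card (N a \<inter> S2)"
    and S2: "\<forall>w\<in>S2. card (N w - S1) < K"
  shows "d * card D0 \<le> 2 * K * card S2"
proof -
  have "(\<Sum>a\<in>D0. card {w\<in>S2. E a w}) = (\<Sum>w\<in>S2. card {a\<in>D0. E a w})"
    by (rule sum_card_swap[OF fD fS2])
  moreover have "{w\<in>S2. E a w} = N a \<inter> S2" for a unfolding neighbours_def using EV by blast
  ultimately have eq: "(\<Sum>a\<in>D0. card (N a \<inter> S2)) = (\<Sum>w\<in>S2. card {a\<in>D0. E a w})" by simp
  have "(\<Sum>w\<in>S2. card {a\<in>D0. E a w}) \<le> (\<Sum>w\<in>S2. K)"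
  proof (intro sum_mono)
    fix w assume w: "w \<in> S2"
    have "{a\<in>D0. E a w} \<subseteq> N w - S1" using dis symE EV unfolding neighbours_def by blast
    hence "card {a\<in>D0. E a w} \<le> card (N w - S1)" using finN by (intro card_mono) auto
    thus "card {a\<in>D0. E a w} \<le> K" using S2 w by fastforce
  qed
  hence up: "(\<Sum>a\<in>D0. card (N a \<inter> S2)) \<le> K * card S2" using eq by (simp add: mult.commute)
  have "d * card D0 = (\<Sum>a\<in>D0. d)" by simp
  also have "\<dots> \<le> (\<Sum>a\<in>D0. 2 * card (N a \<inter> S2))" using lo by (intro sum_mono) blast
  also have "\<dots> = 2 * (\<Sum>a\<in>D0. card (N a \<inter> S2))" by (simp add: sum_distrib_left)
  finally show ?thesis using up by linarith
qed

lemma Dlow: "(m - 10) * card SB \<le> m * D"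
proof -
  have fSB: "finite SB" unfolding SB_def using finV by simp
  have sw: "(\<Sum>b\<in>SB. card {a\<in>A1. E a b}) = (\<Sum>a\<in>A1. card {b\<in>SB. E a b})"
    using sum_card_swap[OF finA1 fSB, of "\<lambda>a b. E a b"] by simp
  have up: "(\<Sum>a\<in>A1. card {b\<in>SB. E a b}) \<le> card A1 * D"
  proof -
    have "(\<Sum>a\<in>A1. card {b\<in>SB. E a b}) \<le> (\<Sum>a\<in>A1. D)"
    proof (intro sum_mono)
      fix a assume a: "a \<in> A1"
      have "{b\<in>SB. E a b} \<subseteq> N a" unfolding neighbours_def SB_def by blast
      hence "card {b\<in>SB. E a b} \<le> deg a" unfolding degree_def using finN by (intro card_mono) auto
      thus "card {b\<in>SB. E a b} \<le> D" using degle a A1V by fastforce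
    qed
    thus ?thesis by simp
  qed
  have lo: "(m - 10) * card A1 \<le> m * card {a\<in>A1. E a b}" if b: "b \<in> SB" for b
  proof -
    have "{a\<in>A1. E a b} = A1 \<inter> N b" unfolding neighbours_def using A1V symE by blast
    moreover have "card A1 = card (A1 \<inter> N b) + card (A1 - N b)" using card_Int_Diff[OF finA1] .
    moreover have "m * card (A1 - N b) \<le> 10 * card A1" using b SB_def by simp
    ultimately have "m * card A1 = m * card {a\<in>A1. E a b} + m * card (A1 - N b)"
      by (simp add: add_mult_distrib2)
    moreover have "(m - 10) * card A1 = m * card A1 - 10 * card A1" by (simp add: diff_mult_distrib)
    ultimately show ?thesis using \<open>m * card (A1 - N b) \<le> 10 * card A1\<close> by linarith
  qed
  have "card SB * ((m - 10) * card A1) = (\<Sum>b\<in>SB. (m - 10) * card A1)" by simp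
  also have "\<dots> \<le> (\<Sum>b\<in>SB. m * card {a\<in>A1. E a b})" using lo by (intro sum_mono) blast
  also have "\<dots> = m * (\<Sum>b\<in>SB. card {a\<in>A1. E a b})" by (simp add: sum_distrib_left)
  also have "\<dots> \<le> m * (card A1 * D)" using sw up by simp
  finally have "card A1 * ((m - 10) * card SB) \<le> card A1 * (m * D)" by (simp add: algebra_simps)
  moreover have "0 < card A1" using A1big K1 by linarith
  ultimately show ?thesis by simp
qed

end


locale bgxp = bgx +
  fixes X Y :: "'a set" and n :: nat
  assumes bip: "bipartite_with V E X Y" and xX: "x \<in> X"
    and cX: "card X = n" and cY: "card Y = n" and conn: "connected_graph V E"
begin

lemma XY: "X \<union> Y = V" "X \<inter> Y = {}" "E u v \<Longrightarrow> (u \<in> X \<and> v \<in> Y) \<or> (u \<in> Y \<and> v \<in> X)"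
  using bip unfolding bipartite_with_def by blast+

lemma sideX: "E a b \<Longrightarrow> b \<in> Y \<Longrightarrow> a \<in> X" using XY by blast
lemma sideY: "E a b \<Longrightarrow> b \<in> X \<Longrightarrow> a \<in> Y" using XY by blast

lemma QY: "Q \<subseteq> Y" unfolding Q_def using XY xX inN by blast

lemma SA_X: "SA \<subseteq> X"
proof
  fix a assume a: "a \<in> SA"
  have "m * card (Q - N a) \<le> 3*D" using a SA_def by simp
  moreover have "3*D < m * D" using m16 D_ge by simp
  ultimately have "m * card (Q - N a) < m * D" by linarith
  hence lt: "card (Q - N a) < card Q" using cardQ by simp
  have "Q \<inter> N a \<noteq> {}"
  proof
    assume "Q \<inter> N a = {}"
    hence "Q - N a = Q" by blast
    thus False using lt by simp
  qed
  then obtain q where "q \<in> Q" "q \<in> N a" by blast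
  thus "a \<in> X" using QY sideX inN by blast
qed

lemma A1X: "A1 \<subseteq> X" using A1_SA SA_X by blast

lemma SB_Y: "SB \<subseteq> Y"
proof
  fix b assume b: "b \<in> SB"
  have c: "m * card (A1 - N b) \<le> 10 * card A1" using b SB_def by simp
  obtain a where a: "a \<in> A1" "a \<in> N b"
  proof (rule ccontr)
    assume h: "\<not> thesis"
    have "A1 - N b = A1" using h that by blast
    hence "m * card A1 \<le> 10 * card A1" using c by simp
    moreover have "0 < card A1" using A1big K1 by linarith
    ultimately show False using m16 by simp
  qed
  thus "b \<in> Y" using A1X sideY inN by blast
qed

lemma X_TA: "a \<in> X \<Longrightarrow> a \<in> TA"
proof (rule ccontr)
  assume a: "a \<in> X" and n: "a \<notin> TA"
  hence aV: "a \<in> V" using XY by blast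
  hence "a \<in> TB" using all_T[OF conn] n by blast
  hence h: "m * card (N a - SA) \<le> deg a + m + m*K" using TB_def by simp
  have "N a - SA = N a" using SA_X a XY inN by blast
  hence "m * deg a \<le> deg a + m + m*K" using h unfolding degree_def by simp
  moreover have "6*K + 2 \<le> deg a" using degV[OF aV] d_ge by linarith
  ultimately show False using ar2[OF m16] by (meson not_le)
qed

lemma Y_TB: "b \<in> Y \<Longrightarrow> b \<in> TB"
proof (rule ccontr)
  assume b: "b \<in> Y" and n: "b \<notin> TB"
  hence bV: "b \<in> V" using XY by blast
  hence "b \<in> TA" using all_T[OF conn] n by blast
  hence h: "m * card (N b - SB) \<le> deg b + m + m*K" using TA_def by simp
  have "N b - SB = N b" using SB_Y b XY inN by blast
  hence "m * deg b \<le> deg b + m + m*K" using h unfolding degree_def by simp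
  moreover have "6*K + 2 \<le> deg b" using degV[OF bV] d_ge by linarith
  ultimately show False using ar2[OF m16] by (meson not_le)
qed

lemma finX: "finite X" "finite Y" using XY finV by (metis finite_Un)+

lemma lowT: "v \<in> V \<Longrightarrow> m * card (N v - S) \<le> deg v + m + m*K \<Longrightarrow> d \<le> 2 * card (N v \<inter> S)"
proof -
  assume v: "v \<in> V" and h: "m * card (N v - S) \<le> deg v + m + m*K"
  have "d \<le> 2 * (deg v - card (N v - S))"
    using ar3[OF m16 _ K1 degV[OF v] h] degV[OF v] d_ge by linarith
  moreover have "deg v = card (N v \<inter> S) + card (N v - S)" unfolding degree_def using card_Int_Diff[OF finN] .
  ultimately show ?thesis by linarith
qed

lemma cntA: "d * card (X - SA) \<le> 2 * K * n"
proof -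
  have "d * card (X - SA) \<le> 2 * K * card SB"
  proof (rule count_gen)
    show "finite (X - SA)" using finX by simp
    show "(X - SA) \<inter> SA = {}" by blast
    show "finite SB" using finX(2) SB_Y finite_subset by blast
    show "\<forall>a\<in>X - SA. d \<le> 2 * card (N a \<inter> SB)"
    proof
      fix a assume "a \<in> X - SA"
      hence "a \<in> TA" using X_TA by blast
      thus "d \<le> 2 * card (N a \<inter> SB)" using lowT TA_def by simp
    qed
    show "\<forall>w\<in>SB. card (N w - SA) < K" using SB_i by blast
  qed
  moreover have "card SB \<le> n" using cY SB_Y finX(2) card_mono by metis
  ultimately show ?thesis by (meson le_trans mult_le_mono2)
qed

lemma cntB: "d * card (Y - SB) \<le> 2 * K * n"
proof -
  have "d * card (Y - SB) \<le> 2 * K * card SA"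
  proof (rule count_gen)
    show "finite (Y - SB)" using finX by simp
    show "(Y - SB) \<inter> SB = {}" by blast
    show "finite SA" using finX(1) SA_X finite_subset by blast
    show "\<forall>a\<in>Y - SB. d \<le> 2 * card (N a \<inter> SA)"
    proof
      fix a assume "a \<in> Y - SB"
      hence "a \<in> TB" using Y_TB by blast
      thus "d \<le> 2 * card (N a \<inter> SA)" using lowT TB_def by simp
    qed
    show "\<forall>w\<in>SA. card (N w - SB) < K" using SA_i by blast
  qed
  moreover have "card SA \<le> n" using cX SA_X finX(1) card_mono by metis
  ultimately show ?thesis by (meson le_trans mult_le_mono2)
qed

lemma edges: "card SA * ((m - 3) * D) \<le> m * num_edges V E"
proof -
  define P where "P = (SIGMA a:SA. N a \<inter> Q)"
  have fSA: "finite SA" using finX(1) SA_X finite_subset by blast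
  have cP: "card P = (\<Sum>a\<in>SA. card (N a \<inter> Q))" unfolding P_def using fSA finN by simp
  have fin_es: "finite (edge_set V E)"
  proof -
    have "edge_set V E \<subseteq> Pow V" unfolding edge_set_def by blast
    thus ?thesis using finV finite_subset by blast
  qed
  have "card ((\<lambda>(a,q). {a,q}) ` P) = card P"
  proof (rule card_image)
    show "inj_on (\<lambda>(a,q). {a,q}) P"
    proof (rule inj_onI)
      fix p1 p2 assume p1: "p1 \<in> P" and p2: "p2 \<in> P" and eq: "(\<lambda>(a,q). {a,q}) p1 = (\<lambda>(a,q). {a,q}) p2"
      obtain a1 q1 where 1: "p1 = (a1,q1)" by fastforce
      obtain a2 q2 where 2: "p2 = (a2,q2)" by fastforce
      have "a1 \<in> X" "a2 \<in> X" "q1 \<in> Y" "q2 \<in> Y" using p1 p2 1 2 SA_X QY unfolding P_def by auto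
      moreover have "{a1,q1} = {a2,q2}" using eq 1 2 by simp
      ultimately show "p1 = p2" using 1 2 XY(2) by (metis disjoint_iff doubleton_eq_iff)
    qed
  qed
  moreover have "(\<lambda>(a,q). {a,q}) ` P \<subseteq> edge_set V E"
  proof
    fix e assume "e \<in> (\<lambda>(a,q). {a,q}) ` P"
    then obtain a q where aq: "(a,q) \<in> P" "e = {a,q}" by auto
    hence "E a q" using inN unfolding P_def by blast
    hence "a \<in> V" "q \<in> V" using EV by blast+
    thus "e \<in> edge_set V E" unfolding edge_set_def using aq(2) \<open>E a q\<close> by blast
  qed
  ultimately have ne: "card P \<le> num_edges V E" unfolding num_edges_def using fin_es card_mono
    by metis
  have "card SA * ((m - 3) * D) = (\<Sum>a\<in>SA. (m - 3) * D)" by simp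
  also have "\<dots> \<le> (\<Sum>a\<in>SA. m * card (N a \<inter> Q))"
  proof (intro sum_mono)
    fix a assume a: "a \<in> SA"
    have "card Q = card (Q \<inter> N a) + card (Q - N a)" using card_Int_Diff[OF finQ] .
    moreover have "Q \<inter> N a = N a \<inter> Q" by blast
    moreover have "m * card (Q - N a) \<le> 3*D" using a SA_def by simp
    ultimately have "m * D = m * card (N a \<inter> Q) + m * card (Q - N a)" using cardQ by (simp add: add_mult_distrib2)
    moreover have "(m - 3) * D = m * D - 3 * D" by (simp add: diff_mult_distrib)
    ultimately show "(m - 3) * D \<le> m * card (N a \<inter> Q)" using \<open>m * card (Q - N a) \<le> 3*D\<close> by linarith
  qed
  also have "\<dots> = m * card P" using cP by (simp add: sum_distrib_left)
  also have "\<dots> \<le> m * num_edges V E" using ne by simp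
  finally show ?thesis .
qed

lemma SA_n: "card SA + card (X - SA) = n"
proof -
  have f: "finite SA" using SA_X finX(1) finite_subset by blast
  have "card (X - SA) = card X - card SA" using card_Diff_subset[OF f SA_X] .
  moreover have "card SA \<le> card X" using card_mono[OF finX(1) SA_X] .
  ultimately show ?thesis using cX by simp
qed
lemma SB_n: "card SB + card (Y - SB) = n"
proof -
  have f: "finite SB" using SB_Y finX(2) finite_subset by blast
  have "card (Y - SB) = card Y - card SB" using card_Diff_subset[OF f SB_Y] .
  moreover have "card SB \<le> card Y" using card_mono[OF finX(2) SB_Y] .
  ultimately show ?thesis using cY by simp
qed


lemma final:
  fixes \<epsilon> :: real
  assumes ep: "0 < \<epsilon>" and mh: "26 \<le> \<epsilon> * m" and dh: "8 * K \<le> \<epsilon> * d"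
  shows "(1 - \<epsilon>) * real n ^ 2 \<le> real (num_edges V E)"
proof -
  define sA where "sA = real (card SA)"
  define sB where "sB = real (card SB)"
  define e where "e = real (num_edges V E)"
  define \<alpha> where "\<alpha> = 2 * real K / real d"
  define a where "a = 1 - 3 / real m"
  define b where "b = 1 - 10 / real m"
  have dpos: "0 < real d" using d_ge(1) by simp
  have mpos: "16 \<le> real m" using m16 by simp
  have al0: "0 \<le> \<alpha>" using dpos unfolding \<alpha>_def by simp
  have al1: "\<alpha> \<le> 1/3"
  proof -
    have "6 * real K \<le> real d" using d_ge(2) by simp
    thus ?thesis using dpos unfolding \<alpha>_def by simp
  qed
  have alE: "2 * \<alpha> \<le> \<epsilon> / 2"
  proof -
    have "2 * \<alpha> = 4 * real K / real d" unfolding \<alpha>_def by simp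
    also have "\<dots> \<le> \<epsilon> / 2" using dh dpos by (simp add: field_simps)
    finally show ?thesis .
  qed
  have mE: "13 / real m \<le> \<epsilon> / 2" using mh mpos by (simp add: field_simps)
  have a0: "0 \<le> a" "a \<le> 1" using mpos unfolding a_def by (simp_all add: field_simps)
  have b0: "0 \<le> b" "b \<le> 1" using mpos unfolding b_def by (simp_all add: field_simps)
  have hA: "real n * (1 - \<alpha>) \<le> sA"
  proof -
    have "real d * real (card (X - SA)) \<le> 2 * real K * real n" using cntA
      by (metis of_nat_le_iff of_nat_mult of_nat_numeral)
    hence "real (card (X - SA)) \<le> \<alpha> * real n" using dpos unfolding \<alpha>_def by (simp add: field_simps)
    moreover have "sA + real (card (X - SA)) = real n" using SA_n unfolding sA_def by (metis of_nat_add)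
    ultimately show ?thesis by (simp add: algebra_simps)
  qed
  have hB: "real n * (1 - \<alpha>) \<le> sB"
  proof -
    have "real d * real (card (Y - SB)) \<le> 2 * real K * real n" using cntB
      by (metis of_nat_le_iff of_nat_mult of_nat_numeral)
    hence "real (card (Y - SB)) \<le> \<alpha> * real n" using dpos unfolding \<alpha>_def by (simp add: field_simps)
    moreover have "sB + real (card (Y - SB)) = real n" using SB_n unfolding sB_def by (metis of_nat_add)
    ultimately show ?thesis by (simp add: algebra_simps)
  qed
  have hD: "b * sB \<le> real D"
  proof -
    have "real ((m - 10) * card SB) \<le> real (m * D)" using Dlow by (simp only: of_nat_le_iff)
    hence "(real m - 10) * sB \<le> real m * real D" using m16 unfolding sB_def by (simp add: of_nat_diff)
    thus ?thesis using mpos unfolding b_def by (simp add: field_simps)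
  qed
  have hE: "a * sA * real D \<le> e"
  proof -
    have "real (card SA * ((m - 3) * D)) \<le> real (m * num_edges V E)" using edges by (simp only: of_nat_le_iff)
    hence "sA * ((real m - 3) * real D) \<le> real m * e" using m16 unfolding sA_def e_def by (simp add: of_nat_diff)
    thus ?thesis using mpos unfolding a_def by (simp add: field_simps)
  qed
  have nn: "0 \<le> real n * (1 - \<alpha>)" using al1 by simp
  have "a * b * (real n * (1 - \<alpha>)) * (real n * (1 - \<alpha>)) \<le> a * sA * (b * sB)"
  proof -
    have "a * (real n * (1 - \<alpha>)) \<le> a * sA" using hA a0 by (intro mult_left_mono) auto
    moreover have "b * (real n * (1 - \<alpha>)) \<le> b * sB" using hB b0 by (intro mult_left_mono) auto
    moreover have "0 \<le> a * sA" using a0 nn hA by simp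
    moreover have "0 \<le> b * (real n * (1 - \<alpha>))" using b0 nn by simp
    ultimately have "(a * (real n * (1 - \<alpha>))) * (b * (real n * (1 - \<alpha>))) \<le> (a * sA) * (b * sB)"
      by (rule mult_mono)
    thus ?thesis by (simp add: algebra_simps)
  qed
  also have "\<dots> \<le> a * sA * real D" using hD a0 nn hA by (intro mult_left_mono) auto
  also have "\<dots> \<le> e" by (rule hE)
  finally have main: "a * b * (1 - \<alpha>) * (1 - \<alpha>) * real n ^ 2 \<le> e" by (simp add: power2_eq_square algebra_simps)
  have "1 - \<epsilon> \<le> a * b * (1 - \<alpha>) * (1 - \<alpha>)"
  proof -
    have "a * b = 1 - 3 / real m - 10 / real m + (3 / real m) * (10 / real m)"
      unfolding a_def b_def using mpos by (simp add: field_simps)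
    moreover have "0 \<le> (3 / real m) * (10 / real m)" by simp
    ultimately have p1: "1 - 3 / real m - 10 / real m \<le> a * b" by linarith
    have p2: "1 - 2*\<alpha> \<le> (1 - \<alpha>) * (1 - \<alpha>)" by (simp add: algebra_simps)
    have "(1 - 13 / real m) * (1 - 2*\<alpha>) \<le> (a * b) * ((1 - \<alpha>) * (1 - \<alpha>))"
    proof (rule mult_mono)
      show "1 - 13 / real m \<le> a * b" using p1 by simp
      show "1 - 2*\<alpha> \<le> (1 - \<alpha>) * (1 - \<alpha>)" by (rule p2)
      show "0 \<le> a * b" using a0 b0 by simp
      show "0 \<le> 1 - 2*\<alpha>" using al1 by simp
    qed
    moreover have "1 - 13 / real m - 2*\<alpha> \<le> (1 - 13 / real m) * (1 - 2*\<alpha>)"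
    proof -
      have gen: "\<And>x y::real. (1-x)*(1-y) = 1 - x - y + x*y" by algebra
      have "(1 - 13 / real m) * (1 - 2*\<alpha>) = 1 - 13 / real m - 2*\<alpha> + (13 / real m) * (2*\<alpha>)"
        by (rule gen)
      moreover have "0 \<le> (13 / real m) * (2*\<alpha>)" using al0 by simp
      ultimately show ?thesis by linarith
    qed
    ultimately show ?thesis using mE alE by (simp add: algebra_simps)
  qed
  hence "(1 - \<epsilon>) * real n ^ 2 \<le> a * b * (1 - \<alpha>) * (1 - \<alpha>) * real n ^ 2"
    by (intro mult_right_mono) auto
  thus ?thesis using main e_def by linarith
qed

end

theorem mainTheorem2:
  fixes t :: nat and \<epsilon> :: real
  assumes "t > 0" and "\<epsilon> > 0"
  shows "\<exists>d::nat. d > 0 \<and>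
    (\<forall>(V :: nat set) E A B n.
       simple_graph V E \<and> connected_graph V E \<and> bipartite_with V E A B \<and>
       card A = n \<and> card B = n \<and> induced_biclaw_free t t V E \<and> min_degree_ge V E d
       \<longrightarrow> real (num_edges V E) \<ge> (1 - \<epsilon>) * real n ^ 2)"
proof -
  define m where "m = 16 + nat \<lceil>26/\<epsilon>\<rceil>"
  define K where "K = Kc t m"
  define d where "d = 2*t*m + 6*K + m + 2 + nat \<lceil>8*real K/\<epsilon>\<rceil>"
  have m16: "16 \<le> m" unfolding m_def by simp
  have mh: "26 \<le> \<epsilon> * real m"
  proof -
    have "26/\<epsilon> \<le> real m" unfolding m_def by linarith
    thus ?thesis using assms(2) by (simp add: field_simps)
  qed
  have dh: "8 * real K \<le> \<epsilon> * real d"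
  proof -
    have "8*real K/\<epsilon> \<le> real d" unfolding d_def by linarith
    thus ?thesis using assms(2) by (simp add: field_simps)
  qed
  show ?thesis
  proof (intro exI conjI allI impI)
    show "d > 0" by (simp add: d_def)
    fix V :: "nat set" and E A B n
    assume H: "simple_graph V E \<and> connected_graph V E \<and> bipartite_with V E A B \<and>
       card A = n \<and> card B = n \<and> induced_biclaw_free t t V E \<and> min_degree_ge V E d"
    have sg: "simple_graph V E" and conn: "connected_graph V E" and bip: "bipartite_with V E A B"
      and cA: "card A = n" and cB: "card B = n" and free: "induced_biclaw_free t t V E"
      and md: "min_degree_ge V E d" using H by auto
    have tf: "\<not> E a b" if "E a c" "E b c" for a b c
      using bip that unfolding bipartite_with_def by blast
    have dbig: "2*t*m + 6*Kc t m + m + 2 \<le> d" unfolding d_def K_def by simp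
    interpret bg V E t m d
    proof
      show "simple_graph V E" by (rule sg)
      show "\<not> E a b" if "E a c" "E b c" for a b c using tf that by blast
      show "induced_biclaw_free t t V E" by (rule free)
      show "0 < t" by (rule assms(1))
      show "16 \<le> m" by (rule m16)
      show "min_degree_ge V E d" by (rule md)
      show "2*t*m + 6*Kc t m + m + 2 \<le> d" by (rule dbig)
    qed
    have finV: "finite V" using sg_fin[OF sg] .
    have Vne: "V \<noteq> {}" using conn unfolding connected_graph_def by blast
    define M where "M = Max (degree V E ` V)"
    have "M \<in> degree V E ` V" unfolding M_def using finV Vne by simp
    then obtain x where xV: "x \<in> V" and xM: "degree V E x = M" by blast
    have xmax: "\<forall>v\<in>V. degree V E v \<le> degree V E x" using xM finV unfolding M_def by simp
    have dh': "real (8 * Kc t m) \<le> \<epsilon> * real d" using dh K_def by simp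
    show "real (num_edges V E) \<ge> (1 - \<epsilon>) * real n ^ 2"
    proof (cases "x \<in> A")
      case True
      interpret bgxp V E t m d x A B n
      proof
        show "x \<in> V" by (rule xV)
        show "\<forall>v\<in>V. degree V E v \<le> degree V E x" by (rule xmax)
        show "bipartite_with V E A B" by (rule bip)
        show "x \<in> A" by (rule True)
        show "card A = n" by (rule cA)
        show "card B = n" by (rule cB)
        show "connected_graph V E" by (rule conn)
      qed
      show ?thesis using final[OF assms(2) mh dh'] .
    next
      case False
      hence xB: "x \<in> B" using xV bip unfolding bipartite_with_def by blast
      have bip': "bipartite_with V E B A" using bip unfolding bipartite_with_def by blast
      interpret bgxp V E t m d x B A n
      proof
        show "x \<in> V" by (rule xV)
        show "\<forall>v\<in>V. degree V E v \<le> degree V E x" by (rule xmax)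
        show "bipartite_with V E B A" by (rule bip')
        show "x \<in> B" by (rule xB)
        show "card B = n" by (rule cB)
        show "card A = n" by (rule cA)
        show "connected_graph V E" by (rule conn)
      qed
      show ?thesis using final[OF assms(2) mh dh'] .
    qed
  qed
qed

end
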